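(* Let $\mathfrak{n}$ be the real $7$-dimensional Lie algebra with basis $e_1,\dots,e_7$ whose nonzero brackets (up to antisymmetry) are $[e_1,e_2]=e_4$, $[e_1,e_4]=e_5$, $[e_1,e_5]=e_6$, $[e_1,e_6]=e_7$, $[e_2,e_3]=e_7$, $[e_2,e_4]=e_6$, $[e_2,e_5]=e_7$. Then $\mathfrak{n}$ is an Einstein nilradical.
   Context: A real nilpotent Lie algebra $\mathfrak{n}$ is called an Einstein nilradical if it admits an inner product such that the left-invariant Riemannian metric it defines on the simply connected nilpotent Lie group with Lie algebra $\mathfrak{n}$ is a nilsoliton, i.e. its Ricci operator satisfies $\mathrm{Ric}=c\,\mathrm{Id}+D$ for some $c\in\mathbb{R}$ and some derivation $D$ of $\mathfrak{n}$. Brackets of basis elements not listed are zero. *)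

theory Defs
  imports "HOL-Analysis.Analysis"
begin

text \<open>Generic Riemannian geometry of a left-invariant metric on a Lie group,
  expressed on the Lie algebra V = real^'n with bracket br and inner product
  given by a symmetric positive definite Gram matrix g.\<close>

definition is_inner_product :: "real^'n^'n \<Rightarrow> bool" where
  "is_inner_product g \<longleftrightarrow> transpose g = g \<and> (\<forall>x. x \<noteq> 0 \<longrightarrow> x \<bullet> (g *v x) > 0)"

definition ip :: "real^'n^'n \<Rightarrow> real^'n \<Rightarrow> real^'n \<Rightarrow> real" where
  "ip g x y = x \<bullet> (g *v y)"

text \<open>Levi-Civita connection on left-invariant fields (Koszul formula):
  2 g(nabla_X Y, Z) = g([X,Y],Z) - g([Y,Z],X) + g([Z,X],Y).\<close>
definition lc_nabla :: "(real^'n \<Rightarrow> real^'n \<Rightarrow> real^'n) \<Rightarrow> real^'n^'n \<Rightarrow> real^'n \<Rightarrow> real^'n \<Rightarrow> real^'n" where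
  "lc_nabla br g X Y = (THE w. \<forall>Z. ip g w Z =
      (ip g (br X Y) Z - ip g (br Y Z) X + ip g (br Z X) Y) / 2)"

definition curv :: "(real^'n \<Rightarrow> real^'n \<Rightarrow> real^'n) \<Rightarrow> real^'n^'n \<Rightarrow> real^'n \<Rightarrow> real^'n \<Rightarrow> real^'n \<Rightarrow> real^'n" where
  "curv br g X Y Z = lc_nabla br g X (lc_nabla br g Y Z) - lc_nabla br g Y (lc_nabla br g X Z)
     - lc_nabla br g (br X Y) Z"

definition ricci_tensor :: "(real^'n \<Rightarrow> real^'n \<Rightarrow> real^'n) \<Rightarrow> real^'n^'n \<Rightarrow> real^'n \<Rightarrow> real^'n \<Rightarrow> real" where
  "ricci_tensor br g X Y = (\<Sum>k\<in>UNIV. (curv br g (axis k 1) X Y) $ k)"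

definition ricci_op :: "(real^'n \<Rightarrow> real^'n \<Rightarrow> real^'n) \<Rightarrow> real^'n^'n \<Rightarrow> real^'n \<Rightarrow> real^'n" where
  "ricci_op br g X = (THE w. \<forall>Y. ip g w Y = ricci_tensor br g X Y)"

definition is_derivation :: "(real^'n \<Rightarrow> real^'n \<Rightarrow> real^'n) \<Rightarrow> (real^'n \<Rightarrow> real^'n) \<Rightarrow> bool" where
  "is_derivation br D \<longleftrightarrow> linear D \<and> (\<forall>X Y. D (br X Y) = br (D X) Y + br X (D Y))"

definition is_nilsoliton :: "(real^'n \<Rightarrow> real^'n \<Rightarrow> real^'n) \<Rightarrow> real^'n^'n \<Rightarrow> bool" where
  "is_nilsoliton br g \<longleftrightarrow> (\<exists>c D. is_derivation br D \<and> (\<forall>X. ricci_op br g X = c *\<^sub>R X + D X))"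

definition einstein_nilradical :: "(real^'n \<Rightarrow> real^'n \<Rightarrow> real^'n) \<Rightarrow> bool" where
  "einstein_nilradical br \<longleftrightarrow> (\<exists>g. is_inner_product g \<and> is_nilsoliton br g)"

datatype idx7 = E1 | E2 | E3 | E4 | E5 | E6 | E7

lemma UNIV_idx7: "(UNIV :: idx7 set) = {E1, E2, E3, E4, E5, E6, E7}"
  using idx7.exhaust by auto

instance idx7 :: finite
  by standard (simp add: UNIV_idx7)

abbreviation ev :: "idx7 \<Rightarrow> real^idx7" where
  "ev i \<equiv> axis i 1"

fun br_basis :: "idx7 \<Rightarrow> idx7 \<Rightarrow> real^idx7" where
  "br_basis E1 E2 = ev E4"
| "br_basis E2 E1 = - ev E4"
| "br_basis E1 E4 = ev E5"
| "br_basis E4 E1 = - ev E5"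
| "br_basis E1 E5 = ev E6"
| "br_basis E5 E1 = - ev E6"
| "br_basis E1 E6 = ev E7"
| "br_basis E6 E1 = - ev E7"
| "br_basis E2 E3 = ev E7"
| "br_basis E3 E2 = - ev E7"
| "br_basis E2 E4 = ev E6"
| "br_basis E4 E2 = - ev E6"
| "br_basis E2 E5 = ev E7"
| "br_basis E5 E2 = - ev E7"
| "br_basis _ _ = 0"

definition br7 :: "real^idx7 \<Rightarrow> real^idx7 \<Rightarrow> real^idx7" where
  "br7 x y = (\<Sum>i\<in>UNIV. \<Sum>j\<in>UNIV. (x $ i * y $ j) *\<^sub>R br_basis i j)"

end

theory Submission
  imports Defs
begin

definition vec7 :: "real \<Rightarrow> real \<Rightarrow> real \<Rightarrow> real \<Rightarrow> real \<Rightarrow> real \<Rightarrow> real \<Rightarrow> real^idx7" where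
  "vec7 a b c d e f g = (\<chi> i. case i of E1 \<Rightarrow> a | E2 \<Rightarrow> b | E3 \<Rightarrow> c | E4 \<Rightarrow> d | E5 \<Rightarrow> e | E6 \<Rightarrow> f | E7 \<Rightarrow> g)"

lemma vec7_nth[simp]:
  "vec7 a b c d e f g $ E1 = a" "vec7 a b c d e f g $ E2 = b" "vec7 a b c d e f g $ E3 = c"
  "vec7 a b c d e f g $ E4 = d" "vec7 a b c d e f g $ E5 = e" "vec7 a b c d e f g $ E6 = f"
  "vec7 a b c d e f g $ E7 = g"
  by (simp_all add: vec7_def)

lemma vec7_eta: "x = vec7 (x$E1) (x$E2) (x$E3) (x$E4) (x$E5) (x$E6) (x$E7)"
  unfolding vec_eq_iff vec7_def by (simp split: idx7.split)

lemma sum7: "(\<Sum>i\<in>UNIV. f i) = f E1 + f E2 + f E3 + f E4 + f E5 + f E6 + (f E7::real)"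
  by (simp add: UNIV_idx7)

lemma axis_nth[simp]: "(axis i (1::real)) $ j = (if j = i then 1 else 0)"
  by (simp add: axis_def)

lemma br7_formula: "br7 x y = vec7 0 0 0 (x$E1*y$E2 - x$E2*y$E1) (x$E1*y$E4 - x$E4*y$E1)
   (x$E1*y$E5 - x$E5*y$E1 + x$E2*y$E4 - x$E4*y$E2)
   (x$E1*y$E6 - x$E6*y$E1 + x$E2*y$E3 - x$E3*y$E2 + x$E2*y$E5 - x$E5*y$E2)"
  unfolding vec_eq_iff br7_def
  apply (intro allI)
  apply (case_tac i)
  apply (simp_all add: sum7 algebra_simps)
  done

fun gent :: "idx7 \<Rightarrow> idx7 \<Rightarrow> real" where
  "gent E1 E1 = 847" | "gent E2 E2 = 726" | "gent E3 E3 = 855" | "gent E3 E5 = 315"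
| "gent E5 E3 = 315" | "gent E4 E4 = 495" | "gent E5 E5 = 585" | "gent E6 E6 = 405"
| "gent E7 E7 = 405" | "gent _ _ = 0"

definition Gm :: "real^idx7^idx7" where "Gm = (\<chi> i j. gent i j)"

lemma ip_formula: "ip Gm x y = 847*x$E1*y$E1 + 726*x$E2*y$E2 + 855*x$E3*y$E3 + 315*x$E3*y$E5
  + 315*x$E5*y$E3 + 495*x$E4*y$E4 + 585*x$E5*y$E5 + 405*x$E6*y$E6 + 405*x$E7*y$E7"
  unfolding ip_def inner_vec_def matrix_vector_mult_def Gm_def
  by (simp add: sum7 algebra_simps)


lemma gent_sym: "gent i j = gent j i"
  by (cases i; cases j; simp)

lemma ipGm_sq: "ip Gm x x = 847*(x$E1)^2 + 726*(x$E2)^2 + 540*(x$E3)^2 + 315*(x$E3+x$E5)^2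
   + 270*(x$E5)^2 + 495*(x$E4)^2 + 405*(x$E6)^2 + 405*(x$E7)^2"
  by (simp add: ip_formula power2_eq_square algebra_simps)

lemma ipGm_pos: assumes "x \<noteq> 0" shows "ip Gm x x > 0"
proof (rule ccontr)
  assume "\<not> ip Gm x x > 0"
  hence le: "ip Gm x x \<le> 0" by simp
  have nn: "(x$E1)^2 \<ge> 0" "(x$E2)^2 \<ge> 0" "(x$E3)^2 \<ge> 0" "(x$E3+x$E5)^2 \<ge> 0"
    "(x$E5)^2 \<ge> 0" "(x$E4)^2 \<ge> 0" "(x$E6)^2 \<ge> 0" "(x$E7)^2 \<ge> 0" by simp_all
  have "(x$E1)^2 = 0" "(x$E2)^2 = 0" "(x$E3)^2 = 0" "(x$E5)^2 = 0" "(x$E4)^2 = 0"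
    "(x$E6)^2 = 0" "(x$E7)^2 = 0"
    using le nn unfolding ipGm_sq by linarith+
  hence "x$E1 = 0" "x$E2 = 0" "x$E3 = 0" "x$E4 = 0" "x$E5 = 0" "x$E6 = 0" "x$E7 = 0" by simp_all
  hence "x = 0" by (subst vec7_eta) (simp add: vec7_def vec_eq_iff split: idx7.split)
  with assms show False by simp
qed

lemma Gm_inner: "is_inner_product Gm"
  unfolding is_inner_product_def
proof
  show "transpose Gm = Gm"
    by (simp add: vec_eq_iff transpose_def Gm_def gent_sym)
  show "\<forall>x. x \<noteq> 0 \<longrightarrow> 0 < x \<bullet> (Gm *v x)"
    using ipGm_pos unfolding ip_def by blast
qed

lemma the_ip:
  assumes "\<forall>Z. ip Gm v Z = f Z"
  shows "(THE w. \<forall>Z. ip Gm w Z = f Z) = v"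
proof (rule the_equality)
  show "\<forall>Z. ip Gm v Z = f Z" using assms .
  fix w assume h: "\<forall>Z. ip Gm w Z = f Z"
  have "ip Gm (w - v) (w - v) = 0" using h assms by (simp add: ip_def inner_diff_left)
  thus "w = v" using ipGm_pos[of "w - v"] by (cases "w - v = 0") auto
qed

definition N7 :: "real^idx7 \<Rightarrow> real^idx7 \<Rightarrow> real^idx7" where
  "N7 X Y = vec7
   ((45/154)*X$E2*Y$E4 + (45/242)*X$E3*Y$E4 + (45/154)*X$E4*Y$E2 + (45/242)*X$E4*Y$E3 + (585/1694)*X$E4*Y$E5 + (585/1694)*X$E5*Y$E4 + (405/1694)*X$E5*Y$E6 + (405/1694)*X$E6*Y$E5 + (405/1694)*X$E6*Y$E7 + (405/1694)*X$E7*Y$E6)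
   ((-15/44)*X$E1*Y$E4 + (135/484)*X$E3*Y$E7 + (-15/44)*X$E4*Y$E1 + (135/484)*X$E4*Y$E6 + (135/484)*X$E5*Y$E7 + (135/484)*X$E6*Y$E4 + (135/484)*X$E7*Y$E3 + (135/484)*X$E7*Y$E5)
   ((7/44)*X$E1*Y$E6 + (-3/22)*X$E2*Y$E7 + (7/44)*X$E6*Y$E1 + (-3/22)*X$E7*Y$E2)
   ((1/2)*X$E1*Y$E2 + (-7/22)*X$E1*Y$E3 + (-13/22)*X$E1*Y$E5 + (-1/2)*X$E2*Y$E1 + (-9/22)*X$E2*Y$E6 + (-7/22)*X$E3*Y$E1 + (-13/22)*X$E5*Y$E1 + (-9/22)*X$E6*Y$E2)
   ((1/2)*X$E1*Y$E4 + (-19/44)*X$E1*Y$E6 + (-3/11)*X$E2*Y$E7 + (-1/2)*X$E4*Y$E1 + (-19/44)*X$E6*Y$E1 + (-3/11)*X$E7*Y$E2)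
   ((1/2)*X$E1*Y$E5 + (-1/2)*X$E1*Y$E7 + (1/2)*X$E2*Y$E4 + (-1/2)*X$E4*Y$E2 + (-1/2)*X$E5*Y$E1 + (-1/2)*X$E7*Y$E1)
   ((1/2)*X$E1*Y$E6 + (1/2)*X$E2*Y$E3 + (1/2)*X$E2*Y$E5 + (-1/2)*X$E3*Y$E2 + (-1/2)*X$E5*Y$E2 + (-1/2)*X$E6*Y$E1)
"




lemma nabla7: "lc_nabla br7 Gm X Y = N7 X Y"
  unfolding lc_nabla_def
  apply (rule the_ip)
  apply (intro allI)
  apply (simp only: ip_formula br7_formula N7_def vec7_nth)
  apply algebra
  done

definition Dm :: "real^idx7 \<Rightarrow> real^idx7" where
  "Dm X = vec7 (25/37268*X$E1) (50/37268*X$E2) (100/37268*X$E3) (75/37268*X$E4)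
     (100/37268*X$E5) (125/37268*X$E6) (150/37268*X$E7)"

lemma ric7: "ricci_tensor br7 Gm X Y = ip Gm ((-107/37268) *\<^sub>R X + Dm X) Y"
  unfolding ricci_tensor_def sum7 curv_def nabla7
  apply (simp add: N7_def br7_formula ip_formula Dm_def)
  apply algebra
  done

lemma ricop7: "ricci_op br7 Gm X = (-107/37268) *\<^sub>R X + Dm X"
  unfolding ricci_op_def by (rule the_ip) (simp add: ric7)

lemma Dm_der: "is_derivation br7 Dm"
  unfolding is_derivation_def
proof (intro conjI allI)
  show "linear Dm"
    by (rule linearI) (simp_all add: Dm_def vec_eq_iff vec7_def algebra_simps split: idx7.split)
  fix X Y
  show "Dm (br7 X Y) = br7 (Dm X) Y + br7 X (Dm Y)"
    apply (rule iffD2[OF vec_eq_iff], rule allI, case_tac i)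
    apply (simp_all add: Dm_def br7_formula)
    done
qed

theorem mainTheorem10:
  shows "einstein_nilradical br7"
  unfolding einstein_nilradical_def is_nilsoliton_def
  using Gm_inner Dm_der ricop7 by blast
end
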